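(* Let $n\ge 4$. Consider the two-graph Moran process on $n$ vertices in which the resident graph $G_R$ is the undirected star $K_{1,n-1}$ and the mutant graph $G_M$ is the clique $K_n$. If $r>\big((n-4)!\big)^{-1/(n-2)}$, then the fixation probability satisfies $$f_{G_R,G_M}(r)\ \ge\ \frac{1-\frac1n}{1+\frac{1}{r(n-2)}+\frac{1}{r^2(n-3)}}\ >\ 1-\frac1n-\frac{1}{r(n-2)}-\frac{1}{r^2(n-3)}.$$
   Context: Two-graph Moran process: vertex set $V=\{1,\dots,n\}$; resident graph $G_R=(V,E_R)$ and mutant graph $G_M=(V,E_M)$, strongly connected, with row-stochastic weight matrices $W_R=[w^R_{ij}]$, $W_M=[w^M_{ij}]$ ($w^R_{ij}>0$ iff $(i,j)\in E_R$, similarly for $M$). The state is the mutant set $S$; residents have fitness $1$, mutants fitness $r>0$. Each step a vertex $i$ is chosen with probability proportional to fitness; if $i$ is a mutant, it picks $j$ with probability $w^M_{ij}$ and $j$ becomes a mutant; if a resident, it picks $j$ with probability $w^R_{ij}$ and $j$ becomes a resident. Absorption at $S=\emptyset$ or $S=V$ (fixation). The fixation probability $f_{G_R,G_M}(r)$ is the probability of fixation when starting with one mutant at a uniformly random vertex. Undirected graphs are unweighted: $w_{ij}=1/\deg(i)$ for each neighbour $j$ of $i$ (edges in both directions). Thus for the clique $K_n$, $w_{ij}=1/(n-1)$ for all $j\ne i$. *)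

theory Defs
  imports Complex_Main
begin

text \<open>Vertex set V = {1..n}. A state is the set S of mutant vertices.\<close>

definition undirected_weights :: "nat \<Rightarrow> (nat \<Rightarrow> nat \<Rightarrow> bool) \<Rightarrow> nat \<Rightarrow> nat \<Rightarrow> real" where
  "undirected_weights n E i j =
     (if i \<in> {1..n} \<and> j \<in> {1..n} \<and> E i j
      then 1 / real (card {k \<in> {1..n}. E i k}) else 0)"

definition star_edge :: "nat \<Rightarrow> nat \<Rightarrow> bool" where
  "star_edge i j \<longleftrightarrow> (i = 1 \<and> j \<noteq> 1) \<or> (j = 1 \<and> i \<noteq> 1)"

definition clique_edge :: "nat \<Rightarrow> nat \<Rightarrow> bool" where
  "clique_edge i j \<longleftrightarrow> i \<noteq> j"

definition moran_trans ::
  "nat \<Rightarrow> real \<Rightarrow> (nat \<Rightarrow> nat \<Rightarrow> real) \<Rightarrow> (nat \<Rightarrow> nat \<Rightarrow> real) \<Rightarrow> nat set \<Rightarrow> nat set \<Rightarrow> real" where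
  "moran_trans n r WR WM S T =
     (if S = {} \<or> S = {1..n} then (if T = S then 1 else 0)
      else (\<Sum>i\<in>{1..n}. \<Sum>j\<in>{1..n}.
              ((if i \<in> S then r else 1) / (r * real (card S) + real (n - card S)))
              * (if i \<in> S then WM i j else WR i j)
              * (if (if i \<in> S then insert j S else S - {j}) = T then 1 else 0)))"

fun moran_dist ::
  "nat \<Rightarrow> real \<Rightarrow> (nat \<Rightarrow> nat \<Rightarrow> real) \<Rightarrow> (nat \<Rightarrow> nat \<Rightarrow> real) \<Rightarrow> nat set \<Rightarrow> nat \<Rightarrow> nat set \<Rightarrow> real" where
  "moran_dist n r WR WM S0 0 T = (if T = S0 then 1 else 0)"
| "moran_dist n r WR WM S0 (Suc t) T =
     (\<Sum>S\<in>Pow {1..n}. moran_dist n r WR WM S0 t S * moran_trans n r WR WM S T)"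

definition fixation_prob ::
  "nat \<Rightarrow> real \<Rightarrow> (nat \<Rightarrow> nat \<Rightarrow> real) \<Rightarrow> (nat \<Rightarrow> nat \<Rightarrow> real) \<Rightarrow> real" where
  "fixation_prob n r WR WM =
     lim (\<lambda>t. (\<Sum>i\<in>{1..n}. moran_dist n r WR WM {i} t {1..n}) / real n)"

end

theory Submission
  imports Defs
begin


lemma WM_eq:
  assumes "i \<in> {1..n}" "j \<in> {1..n}"
  shows "undirected_weights n clique_edge i j = (if i \<noteq> j then 1 / (real n - 1) else 0)"
proof -
  have "{k \<in> {1..n}. i \<noteq> k} = {1..n} - {i}" by auto
  hence "card {k \<in> {1..n}. clique_edge i k} = n - 1" using assms
    by (simp add: clique_edge_def)
  moreover have "n \<ge> 1" using assms by auto
  ultimately show ?thesis using assms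
    by (simp add: undirected_weights_def clique_edge_def of_nat_diff)
qed

lemma WR_eq:
  assumes "i \<in> {1..n}" "j \<in> {1..n}"
  shows "undirected_weights n star_edge i j =
    (if i = 1 then (if j \<noteq> 1 then 1 / (real n - 1) else 0) else (if j = 1 then 1 else 0))"
proof (cases "i = 1")
  case True
  have "{k \<in> {1..n}. star_edge 1 k} = {1..n} - {1}" by (auto simp: star_edge_def)
  hence "card {k \<in> {1..n}. star_edge i k} = n - 1" using True assms by (simp add: card_Diff_singleton)
  moreover have "n \<ge> 1" using assms by auto
  ultimately show ?thesis using assms True
    by (simp add: undirected_weights_def star_edge_def of_nat_diff)
next
  case False
  have "{k \<in> {1..n}. star_edge i k} = {1}" using False assms by (auto simp: star_edge_def)
  then show ?thesis using assms False
    by (auto simp add: undirected_weights_def star_edge_def)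
qed

lemma trans_expand:
  assumes "S \<subseteq> {1..n}" "S \<noteq> {}" "S \<noteq> {1..n}"
  shows "(\<Sum>T\<in>Pow {1..n}. moran_trans n r WR WM S T * F T) =
    (\<Sum>i\<in>{1..n}. \<Sum>j\<in>{1..n}.
              ((if i \<in> S then r else 1) / (r * real (card S) + real (n - card S)))
              * (if i \<in> S then WM i j else WR i j)
              * F (if i \<in> S then insert j S else S - {j}))" (is "_ = ?rhs")
proof -
  have "(\<Sum>T\<in>Pow {1..n}. moran_trans n r WR WM S T * F T) =
     (\<Sum>T\<in>Pow {1..n}. \<Sum>i\<in>{1..n}. \<Sum>j\<in>{1..n}.
              ((if i \<in> S then r else 1) / (r * real (card S) + real (n - card S)))
              * (if i \<in> S then WM i j else WR i j)
              * (if (if i \<in> S then insert j S else S - {j}) = T then F T else 0))"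
  proof (intro sum.cong refl)
    fix T assume "T \<in> Pow {1..n}"
    show "moran_trans n r WR WM S T * F T = (\<Sum>i\<in>{1..n}. \<Sum>j\<in>{1..n}.
              ((if i \<in> S then r else 1) / (r * real (card S) + real (n - card S)))
              * (if i \<in> S then WM i j else WR i j)
              * (if (if i \<in> S then insert j S else S - {j}) = T then F T else 0))"
      unfolding moran_trans_def using assms(2,3)
      by (simp only: if_False simp_thms sum_distrib_right) (intro sum.cong refl, simp)
  qed
  also have "\<dots> = (\<Sum>i\<in>{1..n}. \<Sum>j\<in>{1..n}. \<Sum>T\<in>Pow {1..n}.
              ((if i \<in> S then r else 1) / (r * real (card S) + real (n - card S)))
              * (if i \<in> S then WM i j else WR i j)
              * (if (if i \<in> S then insert j S else S - {j}) = T then F T else 0))"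
    by (subst sum.swap, subst (2) sum.swap, rule refl)
  also have "\<dots> = ?rhs"
  proof (intro sum.cong refl)
    fix i j assume ij: "i \<in> {1..n}" "j \<in> {1..n}"
    have mem: "(if i \<in> S then insert j S else S - {j}) \<in> Pow {1..n}" using assms ij by auto
    show "(\<Sum>T\<in>Pow {1..n}.
              ((if i \<in> S then r else 1) / (r * real (card S) + real (n - card S)))
              * (if i \<in> S then WM i j else WR i j)
              * (if (if i \<in> S then insert j S else S - {j}) = T then F T else 0)) =
          ((if i \<in> S then r else 1) / (r * real (card S) + real (n - card S)))
              * (if i \<in> S then WM i j else WR i j)
              * F (if i \<in> S then insert j S else S - {j})"
      using mem by (simp only: sum_distrib_left[symmetric] sum.delta[OF finite_Pow_iff[THEN iffD2], OF finite_atLeastAtMost] if_True)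
        (simp add: sum.delta)
  qed
  finally show ?thesis .
qed


lemma mut_sum:
  assumes "i \<in> S" "S \<subseteq> {1..n}"
  shows "(\<Sum>j\<in>{1..n}. undirected_weights n clique_edge i j * F (insert j S)) =
     ((real (card S) - 1) * F S + (\<Sum>j\<in>{1..n} - S. F (insert j S))) / (real n - 1)"
proof -
  have fS: "finite S" using assms(2) finite_subset by blast
  have iN: "i \<in> {1..n}" using assms by auto
  have "(\<Sum>j\<in>{1..n}. undirected_weights n clique_edge i j * F (insert j S)) =
        (\<Sum>j\<in>{1..n}. (if j \<noteq> i then F (insert j S) / (real n - 1) else 0))"
    by (intro sum.cong refl) (simp add: WM_eq[OF iN])
  also have "\<dots> = (\<Sum>j\<in>{1..n} - {i}. F (insert j S) / (real n - 1))"
    by (simp add: sum.If_cases) (rule sum.cong, auto)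
  also have "{1..n} - {i} = (S - {i}) \<union> ({1..n} - S)" using assms by auto
  also have "(\<Sum>j\<in>(S - {i}) \<union> ({1..n} - S). F (insert j S) / (real n - 1)) =
     (\<Sum>j\<in>S - {i}. F (insert j S) / (real n - 1)) + (\<Sum>j\<in>{1..n} - S. F (insert j S) / (real n - 1))"
    by (rule sum.union_disjoint) (use fS in auto)
  also have "(\<Sum>j\<in>S - {i}. F (insert j S) / (real n - 1)) = (\<Sum>j\<in>S - {i}. F S / (real n - 1))"
    by (intro sum.cong refl) (simp add: insert_absorb)
  also have "\<dots> = (real (card S) - 1) * F S / (real n - 1)"
  proof -
    have "card S \<ge> 1" using assms fS by (metis One_nat_def Suc_leI card_gt_0_iff empty_iff)
    thus ?thesis using assms fS by (simp add: card_Diff_singleton of_nat_diff)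
  qed
  finally show ?thesis by (simp add: add_divide_distrib sum_divide_distrib)
qed

lemma res_other:
  assumes "i \<in> {1..n}" "i \<noteq> 1"
  shows "(\<Sum>j\<in>{1..n}. undirected_weights n star_edge i j * F (S - {j})) = F (S - {1})"
proof -
  have "(\<Sum>j\<in>{1..n}. undirected_weights n star_edge i j * F (S - {j})) =
     (\<Sum>j\<in>{1..n}. (if j = 1 then F (S - {j}) else 0))"
    by (intro sum.cong refl) (use assms in \<open>simp add: WR_eq\<close>)
  also have "\<dots> = F (S - {1})" using assms by (simp add: sum.delta')
  finally show ?thesis .
qed

lemma res_center:
  assumes "1 \<notin> S" "S \<subseteq> {1..n}" "n \<ge> 1"
  shows "(\<Sum>j\<in>{1..n}. undirected_weights n star_edge 1 j * F (S - {j})) =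
     ((\<Sum>j\<in>S. F (S - {j})) + (real n - 1 - real (card S)) * F S) / (real n - 1)"
proof -
  have fS: "finite S" using assms(2) finite_subset by blast
  have "(\<Sum>j\<in>{1..n}. undirected_weights n star_edge 1 j * F (S - {j})) =
        (\<Sum>j\<in>{1..n}. (if j \<noteq> 1 then F (S - {j}) / (real n - 1) else 0))"
    by (intro sum.cong refl) (use assms in \<open>simp add: WR_eq\<close>)
  also have "\<dots> = (\<Sum>j\<in>{1..n} - {1}. F (S - {j}) / (real n - 1))"
    by (simp add: sum.If_cases) (rule sum.cong, auto)
  also have "{1..n} - {1} = S \<union> ({1..n} - {1} - S)" using assms by auto
  also have "(\<Sum>j\<in>S \<union> ({1..n} - {1} - S). F (S - {j}) / (real n - 1)) =
     (\<Sum>j\<in>S. F (S - {j}) / (real n - 1)) + (\<Sum>j\<in>{1..n} - {1} - S. F (S - {j}) / (real n - 1))"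
    by (rule sum.union_disjoint) (use fS in auto)
  also have "(\<Sum>j\<in>{1..n} - {1} - S. F (S - {j}) / (real n - 1)) = (\<Sum>j\<in>{1..n} - {1} - S. F S / (real n - 1))"
    by (intro sum.cong refl) simp
  also have "card ({1..n} - {1} - S) = n - 1 - card S"
    using assms fS by (simp add: card_Diff_subset card_Diff_singleton Diff_insert2[symmetric] insert_Diff_if)
  moreover have "card S \<le> n - 1"
  proof -
    have "S \<subseteq> {1..n} - {1}" using assms by auto
    from card_mono[OF _ this] show ?thesis using assms by (simp add: card_Diff_singleton)
  qed
  ultimately show ?thesis using assms
    by (simp add: add_divide_distrib sum_divide_distrib of_nat_diff)
qed


lemma E_gen:
  assumes "S \<subseteq> {1..n}" "S \<noteq> {}" "S \<noteq> {1..n}"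
  shows "(\<Sum>T\<in>Pow {1..n}. moran_trans n r (undirected_weights n star_edge) (undirected_weights n clique_edge) S T * F T) =
    (r * real (card S) * ((real (card S) - 1) * F S + (\<Sum>j\<in>{1..n} - S. F (insert j S))) / (real n - 1)
     + (\<Sum>i\<in>{1..n} - S. \<Sum>j\<in>{1..n}. undirected_weights n star_edge i j * F (S - {j})))
    / (r * real (card S) + real (n - card S))"
proof -
  define W where "W = r * real (card S) + real (n - card S)"
  define WR where "WR = undirected_weights n star_edge"
  define WM where "WM = undirected_weights n clique_edge"
  have fS: "finite S" using assms(1) finite_subset by blast
  have "(\<Sum>T\<in>Pow {1..n}. moran_trans n r WR WM S T * F T) =
    (\<Sum>i\<in>{1..n}. \<Sum>j\<in>{1..n}.
              ((if i \<in> S then r else 1) / W)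
              * (if i \<in> S then WM i j else WR i j)
              * F (if i \<in> S then insert j S else S - {j}))"
    unfolding W_def by (rule trans_expand[OF assms])
  also have "\<dots> = (\<Sum>i\<in>S. \<Sum>j\<in>{1..n}.
              ((if i \<in> S then r else 1) / W)
              * (if i \<in> S then WM i j else WR i j)
              * F (if i \<in> S then insert j S else S - {j})) +
       (\<Sum>i\<in>{1..n} - S. \<Sum>j\<in>{1..n}.
              ((if i \<in> S then r else 1) / W)
              * (if i \<in> S then WM i j else WR i j)
              * F (if i \<in> S then insert j S else S - {j}))"
    by (subst sum.subset_diff[OF assms(1) finite_atLeastAtMost]) (simp add: add.commute)
  also have "(\<Sum>i\<in>S. \<Sum>j\<in>{1..n}.
              ((if i \<in> S then r else 1) / W)
              * (if i \<in> S then WM i j else WR i j)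
              * F (if i \<in> S then insert j S else S - {j})) =
      (\<Sum>i\<in>S. r / W * ((real (card S) - 1) * F S + (\<Sum>j\<in>{1..n} - S. F (insert j S))) / (real n - 1))"
  proof (intro sum.cong refl)
    fix i assume i: "i \<in> S"
    have "(\<Sum>j\<in>{1..n}. ((if i \<in> S then r else 1) / W)
              * (if i \<in> S then WM i j else WR i j)
              * F (if i \<in> S then insert j S else S - {j})) =
          r / W * (\<Sum>j\<in>{1..n}. WM i j * F (insert j S))"
      using i by (simp add: sum_distrib_left mult.assoc)
    also have "\<dots> = r / W * ((real (card S) - 1) * F S + (\<Sum>j\<in>{1..n} - S. F (insert j S))) / (real n - 1)"
      unfolding WM_def by (subst mut_sum[OF i assms(1)]) simp
    finally show "(\<Sum>j\<in>{1..n}. ((if i \<in> S then r else 1) / W)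
              * (if i \<in> S then WM i j else WR i j)
              * F (if i \<in> S then insert j S else S - {j})) =
          r / W * ((real (card S) - 1) * F S + (\<Sum>j\<in>{1..n} - S. F (insert j S))) / (real n - 1)" .
  qed
  also have "(\<Sum>i\<in>{1..n} - S. \<Sum>j\<in>{1..n}.
              ((if i \<in> S then r else 1) / W)
              * (if i \<in> S then WM i j else WR i j)
              * F (if i \<in> S then insert j S else S - {j})) =
       (\<Sum>i\<in>{1..n} - S. \<Sum>j\<in>{1..n}. WR i j * F (S - {j})) / W"
    by (simp add: sum_divide_distrib)
  finally show ?thesis unfolding W_def[symmetric] WR_def[symmetric] WM_def[symmetric]
    by (simp add: add_divide_distrib mult_ac)
qed


definition lift :: "(bool \<Rightarrow> nat \<Rightarrow> real) \<Rightarrow> nat set \<Rightarrow> real" where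
  "lift \<phi> T = \<phi> (1 \<in> T) (card (T - {1}))"

abbreviation "PE n r S F \<equiv> (\<Sum>T\<in>Pow {1..n}. moran_trans n r (undirected_weights n star_edge) (undirected_weights n clique_edge) S T * F T)"

lemma E_c1:
  assumes "S \<subseteq> {1..n}" "1 \<in> S" "S \<noteq> {1..n}"
  defines "k \<equiv> card (S - {1})"
  shows "PE n r S (lift \<phi>) = (r * (real k + 1) * (real k * \<phi> True k + (real n - 1 - real k) * \<phi> True (k + 1)) / (real n - 1)
      + (real n - 1 - real k) * \<phi> False k) / (r * (real k + 1) + (real n - 1 - real k))"
proof -
  have fS: "finite S" using assms(1) finite_subset by blast
  have "card S > 0" using fS assms by (auto simp: card_gt_0_iff)
  hence cS: "card S = k + 1" unfolding k_def using assms fS by (simp add: card_Diff_singleton)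
  have "card S < card {1..n}" using assms by (meson finite_atLeastAtMost psubsetI psubset_card_mono)
  hence kn: "k + 1 < n" using cS by simp
  have cNS: "card ({1..n} - S) = n - card S" using assms fS by (simp add: card_Diff_subset)
  have A: "(\<Sum>j\<in>{1..n} - S. lift \<phi> (insert j S)) = (real n - 1 - real k) * \<phi> True (k + 1)"
  proof -
    have "(\<Sum>j\<in>{1..n} - S. lift \<phi> (insert j S)) = (\<Sum>j\<in>{1..n} - S. \<phi> True (k + 1))"
    proof (intro sum.cong refl)
      fix j assume j: "j \<in> {1..n} - S"
      hence "insert j S - {1} = insert j (S - {1})" "j \<notin> S - {1}" using assms by auto
      thus "lift \<phi> (insert j S) = \<phi> True (k + 1)"
        using fS assms(2) unfolding lift_def k_def by simp
    qed
    thus ?thesis using cNS cS kn by (simp add: of_nat_diff)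
  qed
  have R: "(\<Sum>i\<in>{1..n} - S. \<Sum>j\<in>{1..n}. undirected_weights n star_edge i j * lift \<phi> (S - {j}))
      = (real n - 1 - real k) * \<phi> False k"
  proof -
    have "(\<Sum>i\<in>{1..n} - S. \<Sum>j\<in>{1..n}. undirected_weights n star_edge i j * lift \<phi> (S - {j}))
      = (\<Sum>i\<in>{1..n} - S. \<phi> False k)"
    proof (intro sum.cong refl)
      fix i assume i: "i \<in> {1..n} - S"
      hence "i \<noteq> 1" using assms by auto
      with i have "(\<Sum>j\<in>{1..n}. undirected_weights n star_edge i j * lift \<phi> (S - {j})) = lift \<phi> (S - {1})"
        by (intro res_other) auto
      also have "\<dots> = \<phi> False k" unfolding lift_def k_def by simp
      finally show "(\<Sum>j\<in>{1..n}. undirected_weights n star_edge i j * lift \<phi> (S - {j})) = \<phi> False k" .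
    qed
    thus ?thesis using cNS cS kn by (simp add: of_nat_diff)
  qed
  have FS: "lift \<phi> S = \<phi> True k" unfolding lift_def k_def using assms by simp
  have ne: "S \<noteq> {}" using assms by auto
  show ?thesis
    apply (subst E_gen[OF assms(1) ne assms(3)])
    apply (simp only: A R FS)
    using kn cS by (simp add: of_nat_diff add.commute diff_diff_eq)
qed

lemma E_c0:
  assumes "S \<subseteq> {1..n}" "1 \<notin> S" "S \<noteq> {}"
  defines "k \<equiv> card S"
  shows "PE n r S (lift \<phi>) = (r * real k * ((real k - 1) * \<phi> False k + \<phi> True k + (real n - 1 - real k) * \<phi> False (k + 1)) / (real n - 1)
      + (real k * \<phi> False (k - 1) + (real n - 1 - real k) * \<phi> False k) / (real n - 1)
      + (real n - 1 - real k) * \<phi> False k) / (r * real k + (real n - real k))"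
proof -
  have fS: "finite S" using assms(1) finite_subset by blast
  have n1: "n \<ge> 1" using assms by auto
  have sub: "S \<subseteq> {1..n} - {1}" using assms by auto
  have kn: "k \<le> n - 1" unfolding k_def using card_mono[OF _ sub] n1 by simp
  have kn2: "Suc k \<le> n" using kn n1 by linarith
  have k1: "k \<ge> 1" unfolding k_def using fS assms by (simp add: Suc_leI card_gt_0_iff)
  have SN: "S \<noteq> {1..n}" using assms n1 by auto
  define D where "D = {1..n} - S - {1}"
  have c1: "card (D) = n - 1 - k"
  proof -
    have "D = ({1..n} - {1}) - S" unfolding D_def by auto
    thus ?thesis unfolding k_def using sub fS n1 by (simp add: card_Diff_subset card_Diff_singleton)
  qed
  have split: "{1..n} - S = insert 1 (D)" using assms n1 unfolding D_def by auto
  have Dfin: "finite D" "1 \<notin> D" unfolding D_def by auto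
  have A: "(\<Sum>j\<in>{1..n} - S. lift \<phi> (insert j S)) = \<phi> True k + (real n - 1 - real k) * \<phi> False (k + 1)"
  proof -
    have "(\<Sum>j\<in>{1..n} - S. lift \<phi> (insert j S)) = lift \<phi> (insert 1 S) + (\<Sum>j\<in>D. lift \<phi> (insert j S))"
      by (subst split, rule sum.insert[OF Dfin])
    also have "lift \<phi> (insert 1 S) = \<phi> True k" unfolding lift_def k_def using assms by simp
    also have "(\<Sum>j\<in>D. lift \<phi> (insert j S)) = (\<Sum>j\<in>D. \<phi> False (k + 1))"
    proof (intro sum.cong refl)
      fix j assume j: "j \<in> D"
      have jS: "j \<notin> S" "j \<noteq> 1" using j unfolding D_def by auto
      have e1: "insert j S - {1} = insert j S" using jS assms(2) by auto
      have e2: "card (insert j S) = k + 1" unfolding k_def using jS fS by simp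
      show "lift \<phi> (insert j S) = \<phi> False (k + 1)" unfolding lift_def e1 e2 using jS assms(2) by simp
    qed
    finally show ?thesis using c1 kn2 by (simp add: of_nat_diff)
  qed
  have R: "(\<Sum>i\<in>{1..n} - S. \<Sum>j\<in>{1..n}. undirected_weights n star_edge i j * lift \<phi> (S - {j}))
      = (real k * \<phi> False (k - 1) + (real n - 1 - real k) * \<phi> False k) / (real n - 1)
      + (real n - 1 - real k) * \<phi> False k"
  proof -
    have "(\<Sum>i\<in>{1..n} - S. \<Sum>j\<in>{1..n}. undirected_weights n star_edge i j * lift \<phi> (S - {j}))
      = (\<Sum>j\<in>{1..n}. undirected_weights n star_edge 1 j * lift \<phi> (S - {j}))
       + (\<Sum>i\<in>D. \<Sum>j\<in>{1..n}. undirected_weights n star_edge i j * lift \<phi> (S - {j}))"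
      by (subst split, rule sum.insert[OF Dfin])
    also have "(\<Sum>j\<in>{1..n}. undirected_weights n star_edge 1 j * lift \<phi> (S - {j}))
       = ((\<Sum>j\<in>S. lift \<phi> (S - {j})) + (real n - 1 - real (card S)) * lift \<phi> S) / (real n - 1)"
      by (rule res_center[OF assms(2,1) n1])
    also have "(\<Sum>j\<in>S. lift \<phi> (S - {j})) = (\<Sum>j\<in>S. \<phi> False (k - 1))"
    proof (intro sum.cong refl)
      fix j assume j: "j \<in> S"
      hence "S - {j} - {1} = S - {j}" "1 \<notin> S - {j}" using assms by auto
      have "1 \<notin> S - {j}" "S - {j} - {1} = S - {j}" using assms(2) by auto
      thus "lift \<phi> (S - {j}) = \<phi> False (k - 1)" using fS j assms(2) unfolding lift_def k_def
        by (simp add: card_Diff_singleton)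
    qed
    also have "lift \<phi> S = \<phi> False k" unfolding lift_def k_def using assms by simp
    also have "(\<Sum>i\<in>D. \<Sum>j\<in>{1..n}. undirected_weights n star_edge i j * lift \<phi> (S - {j}))
        = (\<Sum>i\<in>D. \<phi> False k)"
    proof (intro sum.cong refl)
      fix i assume i: "i \<in> D"
      hence "(\<Sum>j\<in>{1..n}. undirected_weights n star_edge i j * lift \<phi> (S - {j})) = lift \<phi> (S - {1})"
        unfolding D_def by (intro res_other) auto
      also have "\<dots> = \<phi> False k" unfolding lift_def k_def using assms by simp
      finally show "(\<Sum>j\<in>{1..n}. undirected_weights n star_edge i j * lift \<phi> (S - {j})) = \<phi> False k" .
    qed
    finally show ?thesis using c1 kn2 k_def by (simp add: of_nat_diff)
  qed
  have FS: "lift \<phi> S = \<phi> False k" unfolding lift_def k_def using assms by simp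
  show ?thesis
    apply (subst E_gen[OF assms(1) assms(3) SN])
    apply (simp only: A R FS k_def[symmetric])
    using kn k1 by (simp add: of_nat_diff)
qed


lemma fact_key:
  fixes r :: real
  assumes r: "r > 0" and cond: "r ^ (p + 2) * fact p > 1"
  shows "i \<le> p \<Longrightarrow> fact (p - i) \<le> r ^ i * fact p"
    and "1 \<le> r ^ (p + 1) * fact p"
proof -
  show "1 \<le> r ^ (p + 1) * fact p"
  proof (cases "r \<ge> 1")
    case True
    have A: "1 \<le> r ^ (p + 1)" using True by (rule one_le_power)
    have B: "(1::real) \<le> fact p" by simp
    have "1 * 1 \<le> r ^ (p + 1) * fact p" by (rule mult_mono[OF A B]) (use A in auto)
    thus ?thesis by simp
  next
    case False
    have "r ^ (p + 2) \<le> r ^ (p + 1)" using False r by (intro power_decreasing) auto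
    hence "r ^ (p + 2) * fact p \<le> r ^ (p + 1) * fact p" by (intro mult_right_mono) auto
    thus ?thesis using cond by linarith
  qed
next
  assume ip: "i \<le> p"
  have fs: "fact p = real (prod Suc {p - i..<p}) * fact (p - i)" using fact_split[OF ip, where 'a=real] by simp
  show "fact (p - i) \<le> r ^ i * fact p"
  proof (cases "r * (real (p - i) + 1) \<ge> 1")
    case True
    have "1 \<le> (\<Prod>m\<in>{p - i..<p}. r * real (Suc m))"
    proof (rule prod_ge_1)
      fix m assume "m \<in> {p - i..<p}"
      hence "real (p - i) + 1 \<le> real (Suc m)" by auto
      hence "r * (real (p - i) + 1) \<le> r * real (Suc m)" using r by (intro mult_left_mono) auto
      thus "1 \<le> r * real (Suc m)" using True by linarith
    qed
    also have "(\<Prod>m\<in>{p - i..<p}. r * real (Suc m)) = r ^ i * real (prod Suc {p - i..<p})"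
      using ip by (simp add: prod.distrib of_nat_prod)
    finally have "1 \<le> r ^ i * real (prod Suc {p - i..<p})" .
    hence "1 * fact (p - i) \<le> r ^ i * real (prod Suc {p - i..<p}) * fact (p - i)"
      by (intro mult_right_mono) auto
    thus ?thesis using fs by (simp add: mult.assoc)
  next
    case False
    have r1: "r < 1"
    proof -
      have "r * 1 \<le> r * (real (p - i) + 1)" using r by (intro mult_left_mono) auto
      thus ?thesis using False by linarith
    qed
    have "(\<Prod>m\<in>{0..<p - i}. r * real (Suc m)) \<le> 1"
    proof (rule prod_le_1)
      fix m assume "m \<in> {0..<p - i}"
      hence "real (Suc m) \<le> real (p - i) + 1" by auto
      hence X: "r * real (Suc m) \<le> r * (real (p - i) + 1)" using r by (intro mult_left_mono) auto
      have "0 \<le> r * real (Suc m)" using r by simp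
      moreover have "r * real (Suc m) \<le> 1" using X False by linarith
      ultimately show "0 \<le> r * real (Suc m) \<and> r * real (Suc m) \<le> 1" by simp
    qed
    also have "(\<Prod>m\<in>{0..<p - i}. r * real (Suc m)) = r ^ (p - i) * fact (p - i)"
      by (simp add: prod.distrib fact_prod_Suc of_nat_prod)
    finally have A: "r ^ (p - i) * fact (p - i) \<le> 1" .
    have "r ^ (p + 2) \<le> r ^ p" using r r1 by (intro power_decreasing) auto
    hence "r ^ (p + 2) * fact p \<le> r ^ p * fact p" by (intro mult_right_mono) auto
    hence B: "1 \<le> r ^ p * fact p" using cond by linarith
    have "r ^ p = r ^ (p - i) * r ^ i" using ip by (simp add: power_add[symmetric])
    hence "r ^ (p - i) * fact (p - i) \<le> r ^ (p - i) * (r ^ i * fact p)" using A B by (simp add: mult.assoc)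
    thus ?thesis using r by simp
  qed
qed


definition ee :: "nat \<Rightarrow> real \<Rightarrow> nat \<Rightarrow> real" where
  "ee n r l = fact (n - 1 - l) / (r ^ (l - 1) * fact (n - 2))"

lemma sum_bound:
  fixes r :: real
  assumes r: "r > 0" and cond: "r ^ (p + 2) * fact p > 1"
  shows "(\<Sum>l\<in>{1..p+3}. ee (p+4) r l) + ee (p+4) r (p+3) / r
     \<le> 1 + 1 / (r * (real p + 2)) + 1 / (r ^ 2 * (real p + 1))"
proof -
  define c where "c = 1 / (r ^ 2 * (real p + 2) * (real p + 1))"
  have fp2: "(fact (p + 2) :: real) = (real p + 2) * (real p + 1) * fact p"
    by (simp add: numeral_2_eq_2 algebra_simps)
  have e1: "ee (p+4) r 1 = 1" by (simp add: ee_def)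
  have e2: "ee (p+4) r 2 = 1 / (r * (real p + 2))"
  proof -
    have "fact (p + 2) = (real p + 2) * (fact (p + 1) :: real)"
      by (simp add: numeral_2_eq_2 algebra_simps)
    moreover have "p + 4 - 1 - 2 = p + 1" "p + 4 - 2 = p + 2" by auto
    ultimately show ?thesis by (simp add: ee_def)
  qed
  have e3: "ee (p+4) r l \<le> c" if l: "l \<in> {3..p+3}" for l
  proof -
    obtain i where i: "l = i + 3" "i \<le> p" using l by (metis add.commute atLeastAtMost_iff le_Suc_ex add_le_cancel_left)
    have "ee (p+4) r l = c * (fact (p - i) / (r ^ i * fact p))"
    proof -
      have "p + 4 - 1 - l = p - i" "l - 1 = i + 2" "p + 4 - 2 = p + 2" using i by auto
      thus ?thesis unfolding ee_def c_def using r by (simp add: fp2 power_add field_simps power2_eq_square)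
    qed
    also have "\<dots> \<le> c * 1"
    proof (intro mult_left_mono)
      show "fact (p - i) / (r ^ i * fact p) \<le> 1" using fact_key(1)[OF r cond i(2)] r by simp
      show "0 \<le> c" unfolding c_def using r by simp
    qed
    finally show ?thesis by simp
  qed
  have elast: "ee (p+4) r (p+3) / r \<le> c"
  proof -
    have "ee (p+4) r (p+3) / r = c * (1 / (r ^ (p + 1) * fact p))"
      unfolding ee_def c_def using r by (simp add: fp2 power_add field_simps numeral_2_eq_2 numeral_3_eq_3)
    also have "\<dots> \<le> c * 1"
    proof (intro mult_left_mono)
      show "1 / (r ^ (p + 1) * fact p) \<le> 1" using fact_key(2)[OF r cond] r by simp
      show "0 \<le> c" unfolding c_def using r by simp
    qed
    finally show ?thesis by simp
  qed
  have split: "{1..p+3} = insert 1 (insert 2 {3..p+3})" by auto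
  have "(\<Sum>l\<in>{1..p+3}. ee (p+4) r l) = ee (p+4) r 1 + ee (p+4) r 2 + (\<Sum>l\<in>{3..p+3}. ee (p+4) r l)"
    by (subst split) simp
  also have "(\<Sum>l\<in>{3..p+3}. ee (p+4) r l) \<le> (\<Sum>l\<in>{3..p+3}. c)" by (rule sum_mono) (rule e3)
  also have "(\<Sum>l\<in>{3..p+3}. c) = (real p + 1) * c" by simp
  finally have "(\<Sum>l\<in>{1..p+3}. ee (p+4) r l) + ee (p+4) r (p+3) / r \<le> 1 + 1 / (r * (real p + 2)) + (real p + 2) * c"
    using e1 e2 elast by (simp add: algebra_simps)
  also have "(real p + 2) * c = 1 / (r ^ 2 * (real p + 1))" unfolding c_def by simp
  finally show ?thesis .
qed


abbreviation "MT n r S T \<equiv> moran_trans n r (undirected_weights n star_edge) (undirected_weights n clique_edge) S T"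
abbreviation "md n r S0 t S \<equiv> moran_dist n r (undirected_weights n star_edge) (undirected_weights n clique_edge) S0 t S"

lemma uw_nonneg: "undirected_weights n E i j \<ge> 0"
  by (simp add: undirected_weights_def)

lemma MT_nonneg:
  assumes r: "r > 0" and S: "S \<subseteq> {1..n}"
  shows "MT n r S T \<ge> 0"
proof (cases "S = {} \<or> S = {1..n}")
  case True thus ?thesis by (simp add: moran_trans_def)
next
  case False
  have fS: "finite S" using S finite_subset by blast
  hence "card S > 0" using False by (simp add: card_gt_0_iff)
  hence W: "r * real (card S) + real (n - card S) > 0" using r by (simp add: add_pos_nonneg)
  have r0: "0 \<le> r" using r by simp
  show ?thesis using False unfolding moran_trans_def
    apply (simp only: if_False simp_thms)
    apply (intro sum_nonneg mult_nonneg_nonneg divide_nonneg_pos[OF _ W])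
    by (simp_all add: r0 uw_nonneg)
qed

lemma md_nonneg:
  assumes r: "r > 0"
  shows "md n r S0 t T \<ge> 0"
proof (induction t arbitrary: T)
  case 0 thus ?case by simp
next
  case (Suc t) thus ?case by (auto intro!: sum_nonneg mult_nonneg_nonneg MT_nonneg[OF r])
qed

lemma md_step:
  "(\<Sum>T\<in>Pow {1..n}. md n r S0 (Suc t) T * F T) = (\<Sum>S\<in>Pow {1..n}. md n r S0 t S * PE n r S F)"
proof -
  have "(\<Sum>T\<in>Pow {1..n}. md n r S0 (Suc t) T * F T) =
     (\<Sum>T\<in>Pow {1..n}. \<Sum>S\<in>Pow {1..n}. md n r S0 t S * (MT n r S T * F T))"
    by (simp add: sum_distrib_right mult.assoc)
  also have "\<dots> = (\<Sum>S\<in>Pow {1..n}. \<Sum>T\<in>Pow {1..n}. md n r S0 t S * (MT n r S T * F T))"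
    by (rule sum.swap)
  also have "\<dots> = (\<Sum>S\<in>Pow {1..n}. md n r S0 t S * PE n r S F)"
    by (simp add: sum_distrib_left)
  finally show ?thesis .
qed

lemma md_zero:
  assumes "S0 \<in> Pow {1..n}"
  shows "(\<Sum>T\<in>Pow {1..n}. md n r S0 0 T * F T) = F S0"
proof -
  have "(\<Sum>T\<in>Pow {1..n}. md n r S0 0 T * F T) = (\<Sum>T\<in>Pow {1..n}. if T = S0 then F T else 0)"
    by (intro sum.cong) auto
  thus ?thesis using assms by (simp add: sum.delta)
qed

lemma PE_absorb:
  assumes "S \<in> Pow {1..n}" "S = {} \<or> S = {1..n}"
  shows "PE n r S F = F S"
proof -
  have "PE n r S F = (\<Sum>T\<in>Pow {1..n}. if S = T then F T else 0)"
    using assms(2) by (intro sum.cong refl) (auto simp: moran_trans_def)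
  thus ?thesis using assms(1) by (simp add: sum.delta)
qed

lemma drift_sum:
  assumes r: "r > 0"
    and drift: "\<And>S. S \<in> Pow {1..n} \<Longrightarrow> PE n r S F \<ge> F S + d S"
  shows "(\<Sum>T\<in>Pow {1..n}. md n r S0 t T * F T) \<ge>
     (\<Sum>T\<in>Pow {1..n}. md n r S0 0 T * F T) + (\<Sum>s<t. \<Sum>S\<in>Pow {1..n}. md n r S0 s S * d S)"
proof (induction t)
  case 0 thus ?case by simp
next
  case (Suc t)
  have "(\<Sum>T\<in>Pow {1..n}. md n r S0 (Suc t) T * F T) = (\<Sum>S\<in>Pow {1..n}. md n r S0 t S * PE n r S F)"
    by (rule md_step)
  also have "\<dots> \<ge> (\<Sum>S\<in>Pow {1..n}. md n r S0 t S * (F S + d S))"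
    by (intro sum_mono mult_left_mono drift md_nonneg[OF r])
  finally have "(\<Sum>T\<in>Pow {1..n}. md n r S0 (Suc t) T * F T) \<ge>
     (\<Sum>S\<in>Pow {1..n}. md n r S0 t S * F S) + (\<Sum>S\<in>Pow {1..n}. md n r S0 t S * d S)"
    by (simp add: distrib_left sum.distrib)
  thus ?case using Suc.IH by simp
qed

lemma lift_const: "lift (\<lambda>b k. 1) = (\<lambda>T. 1)"
  by (simp add: lift_def fun_eq_iff)

lemma one_c0:
  fixes N a r :: real
  assumes "N - 1 > 0" "r * a + (N - a) > 0"
  shows "(r*a*((a-1)*1 + 1 + (N-1-a)*1)/(N-1) + (a*1 + (N-1-a)*1)/(N-1) + (N-1-a)*1)/(r*a + (N-a)) = 1"
proof -
  have e1: "r*a*((a-1)*1 + 1 + (N-1-a)*1)/(N-1) = r * a" using assms(1) by simp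
  have e2: "(a*1 + (N-1-a)*1)/(N-1) + (N-1-a)*1 = N - a" using assms(1) by simp
  show ?thesis unfolding add.assoc[of "r*a*((a-1)*1 + 1 + (N-1-a)*1)/(N-1)"] e2 e1 using assms by simp
qed
lemma one_c1:
  fixes N a r :: real
  assumes "N - 1 > 0" "r * (a + 1) + (N - 1 - a) > 0"
  shows "(r * (a + 1) * (a * 1 + (N - 1 - a) * 1) / (N - 1) + (N - 1 - a) * 1) / (r * (a + 1) + (N - 1 - a)) = 1"
proof -
  have e1: "r * (a + 1) * (a * 1 + (N - 1 - a) * 1) / (N - 1) = r * (a + 1)" using assms(1) by simp
  show ?thesis unfolding e1 using assms(2) by simp
qed

lemma PE_one:
  assumes r: "r > 0" and n: "n \<ge> 2" and S: "S \<in> Pow {1..n}"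
  shows "PE n r S (\<lambda>T. 1) = 1"
proof (cases "S = {} \<or> S = {1..n}")
  case True thus ?thesis using PE_absorb[OF S True, of r "\<lambda>T. 1"] by simp
next
  case False
  have Ss: "S \<subseteq> {1..n}" using S by auto
  have fS: "finite S" using Ss finite_subset by blast
  have n1: "real n - 1 > 0" using n by simp
  show ?thesis
  proof (cases "1 \<in> S")
    case True
    define k where "k = card (S - {1})"
    have "card S < card {1..n}" using Ss False by (meson finite_atLeastAtMost psubsetI psubset_card_mono)
    moreover have "card S = k + 1" unfolding k_def using True fS
      by (metis Suc_eq_plus1 card.remove)
    ultimately have kn: "real k + 1 < real n" by simp
    have d: "r * (real k + 1) + (real n - 1 - real k) > 0" using r kn by (simp add: add_pos_nonneg)
    have SN: "S \<noteq> {1..n}" using False by auto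
    have "PE n r S (\<lambda>T. 1) = (r * (real k + 1) * (real k * 1 + (real n - 1 - real k) * 1) / (real n - 1)
      + (real n - 1 - real k) * 1) / (r * (real k + 1) + (real n - 1 - real k))"
      using E_c1[OF Ss True SN, of r "\<lambda>b k. 1"] unfolding lift_const k_def[symmetric] .
    also have "\<dots> = 1" by (rule one_c1) (use n1 d in auto)
    finally show ?thesis .
  next
    case c0: False
    define k where "k = card S"
    have sub: "S \<subseteq> {1..n} - {1}" using Ss c0 by auto
    have "k \<le> n - 1" unfolding k_def using card_mono[OF _ sub] n by simp
    hence kn: "real k \<le> real n - 1" using n by linarith
    have "k \<ge> 1" unfolding k_def using fS False by (simp add: Suc_leI card_gt_0_iff)
    hence d: "r * real k + (real n - real k) > 0" using r kn by (simp add: add_pos_nonneg)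
    have ne: "S \<noteq> {}" using False by auto
    have "PE n r S (\<lambda>T. 1) = (r * real k * ((real k - 1) * 1 + 1 + (real n - 1 - real k) * 1) / (real n - 1)
      + (real k * 1 + (real n - 1 - real k) * 1) / (real n - 1)
      + (real n - 1 - real k) * 1) / (r * real k + (real n - real k))"
      using E_c0[OF Ss c0 ne, of r "\<lambda>b k. 1"] unfolding lift_const k_def[symmetric] .
    also have "\<dots> = 1" by (rule one_c0) (use n1 d in auto)
    finally show ?thesis .
  qed
qed



lemma alg1:
  fixes N a x M r :: real
  assumes "N - 1 > 0" "N - 1 - a > 0" "a \<ge> 0" "x > 0" "M > 1" "r > 0" "r * M > N - 1"
  shows "M * x < (r*(a+1)*(a*(M*x) + (N-1-a)*(M*M*x))/(N-1) + (N-1-a)*x)/(r*(a+1) + (N-1-a))"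
proof -
  have N1: "N - 1 \<noteq> 0" using assms by simp
  have den: "r*(a+1) + (N-1-a) > 0" using assms by (simp add: add_pos_pos)
  have "(r*(a+1)*(a*(M*x) + (N-1-a)*(M*M*x))/(N-1) + (N-1-a)*x) - M * x * (r*(a+1) + (N-1-a))
      = (r*(a+1)*(a*(M*x) + (N-1-a)*(M*M*x)) + ((N-1-a)*x - M * x * (r*(a+1) + (N-1-a)))*(N-1))/(N-1)"
    using N1 by (simp add: add_divide_distrib diff_divide_distrib)
  also have "r*(a+1)*(a*(M*x) + (N-1-a)*(M*M*x)) + ((N-1-a)*x - M * x * (r*(a+1) + (N-1-a)))*(N-1)
      = (N-1-a)*x*(M-1)*(r*(a+1)*M - (N-1))" by algebra
  finally have id: "(r*(a+1)*(a*(M*x) + (N-1-a)*(M*M*x))/(N-1) + (N-1-a)*x) - M * x * (r*(a+1) + (N-1-a))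
      = (N-1-a)*x*(M-1)*(r*(a+1)*M - (N-1))/(N-1)" .
  have "r*(a+1)*M \<ge> r * M" using assms by (simp add: algebra_simps)
  hence "r*(a+1)*M - (N-1) > 0" using assms by linarith
  hence "(N-1-a)*x*(M-1)*(r*(a+1)*M - (N-1))/(N-1) > 0" using assms by simp
  with id have "M * x * (r*(a+1) + (N-1-a)) < (r*(a+1)*(a*(M*x) + (N-1-a)*(M*M*x))/(N-1) + (N-1-a)*x)"
    by linarith
  thus ?thesis using den by (simp add: pos_less_divide_eq)
qed

lemma alg2:
  fixes N a y M r :: real
  assumes "N - 1 > 0" "N - 1 - a \<ge> 0" "a \<ge> 1" "y > 0" "M > 1" "r > 0" "r * M > N - 1" "N \<ge> 2"
  shows "M * y < (r*a*((a-1)*(M*y) + M*M*y + (N-1-a)*(M*M*y))/(N-1) + (a*y + (N-1-a)*(M*y))/(N-1) + (N-1-a)*(M*y))/(r*a + (N-a))"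
proof -
  have N1: "N - 1 \<noteq> 0" using assms by simp
  have den: "r*a + (N-a) > 0" using assms by (simp add: add_pos_nonneg)
  have "(r*a*((a-1)*(M*y) + M*M*y + (N-1-a)*(M*M*y))/(N-1) + (a*y + (N-1-a)*(M*y))/(N-1) + (N-1-a)*(M*y)) - M * y * (r*a + (N-a))
     = (r*a*((a-1)*(M*y) + M*M*y + (N-1-a)*(M*M*y)) + (a*y + (N-1-a)*(M*y)) + ((N-1-a)*(M*y) - M * y * (r*a + (N-a)))*(N-1))/(N-1)"
    using N1 by (simp add: add_divide_distrib diff_divide_distrib)
  also have "r*a*((a-1)*(M*y) + M*M*y + (N-1-a)*(M*M*y)) + (a*y + (N-1-a)*(M*y)) + ((N-1-a)*(M*y) - M * y * (r*a + (N-a)))*(N-1)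
     = a*y*(M-1)*(r*M*(N-a) - 1)" by algebra
  finally have id: "(r*a*((a-1)*(M*y) + M*M*y + (N-1-a)*(M*M*y))/(N-1) + (a*y + (N-1-a)*(M*y))/(N-1) + (N-1-a)*(M*y)) - M * y * (r*a + (N-a))
      = a*y*(M-1)*(r*M*(N-a) - 1)/(N-1)" .
  have "r*M*(N-a) \<ge> r * M * 1" using assms by (intro mult_left_mono) auto
  hence "r*M*(N-a) - 1 > 0" using assms by linarith
  hence "a*y*(M-1)*(r*M*(N-a) - 1)/(N-1) > 0" using assms by simp
  with id have "M * y * (r*a + (N-a)) < (r*a*((a-1)*(M*y) + M*M*y + (N-1-a)*(M*M*y))/(N-1) + (a*y + (N-1-a)*(M*y))/(N-1) + (N-1-a)*(M*y))"
    by linarith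
  thus ?thesis using den by (simp add: pos_less_divide_eq)
qed

lemma alg3:
  fixes N a h u r :: real
  assumes "N - 1 > 0" "N - 1 - a > 0" "a \<ge> 0" "r > 0" "u \<ge> h"
  shows "h \<le> (r*(a+1)*(a*h + (N-1-a)*u)/(N-1) + (N-1-a)*h)/(r*(a+1) + (N-1-a))"
proof -
  have N1: "N - 1 \<noteq> 0" using assms by simp
  have den: "r*(a+1) + (N-1-a) > 0" using assms by (simp add: add_pos_pos)
  have "(r*(a+1)*(a*h + (N-1-a)*u)/(N-1) + (N-1-a)*h) - h * (r*(a+1) + (N-1-a))
      = (r*(a+1)*(a*h + (N-1-a)*u) + ((N-1-a)*h - h * (r*(a+1) + (N-1-a)))*(N-1))/(N-1)"
    using N1 by (simp add: add_divide_distrib diff_divide_distrib)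
  also have "r*(a+1)*(a*h + (N-1-a)*u) + ((N-1-a)*h - h * (r*(a+1) + (N-1-a)))*(N-1)
      = r*(a+1)*(N-1-a)*(u-h)" by algebra
  finally have id: "(r*(a+1)*(a*h + (N-1-a)*u)/(N-1) + (N-1-a)*h) - h * (r*(a+1) + (N-1-a))
      = r*(a+1)*(N-1-a)*(u-h)/(N-1)" .
  have "r*(a+1)*(N-1-a)*(u-h)/(N-1) \<ge> 0" using assms by simp
  with id have "h * (r*(a+1) + (N-1-a)) \<le> (r*(a+1)*(a*h + (N-1-a)*u)/(N-1) + (N-1-a)*h)"
    by linarith
  thus ?thesis using den by (simp add: pos_le_divide_eq)
qed

lemma alg4:
  fixes N a h v b c r :: real
  assumes "N - 1 > 0" "N - 1 - a \<ge> 0" "a \<ge> 1" "r > 0"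
    and key: "r*a*(v-h) + r*a*(N-1-a)*(b-h) + a*(c-h) \<ge> 0"
  shows "h \<le> (r*a*((a-1)*h + v + (N-1-a)*b)/(N-1) + (a*c + (N-1-a)*h)/(N-1) + (N-1-a)*h)/(r*a + (N-a))"
proof -
  have N1: "N - 1 \<noteq> 0" using assms by simp
  have den: "r*a + (N-a) > 0" using assms by (simp add: add_pos_nonneg)
  have "(r*a*((a-1)*h + v + (N-1-a)*b)/(N-1) + (a*c + (N-1-a)*h)/(N-1) + (N-1-a)*h) - h * (r*a + (N-a))
      = (r*a*((a-1)*h + v + (N-1-a)*b) + (a*c + (N-1-a)*h) + ((N-1-a)*h - h * (r*a + (N-a)))*(N-1))/(N-1)"
    using N1 by (simp add: add_divide_distrib diff_divide_distrib)
  also have "r*a*((a-1)*h + v + (N-1-a)*b) + (a*c + (N-1-a)*h) + ((N-1-a)*h - h * (r*a + (N-a)))*(N-1)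
      = r*a*(v-h) + r*a*(N-1-a)*(b-h) + a*(c-h)" by algebra
  finally have id: "(r*a*((a-1)*h + v + (N-1-a)*b)/(N-1) + (a*c + (N-1-a)*h)/(N-1) + (N-1-a)*h) - h * (r*a + (N-a))
      = (r*a*(v-h) + r*a*(N-1-a)*(b-h) + a*(c-h))/(N-1)" .
  have "(r*a*(v-h) + r*a*(N-1-a)*(b-h) + a*(c-h))/(N-1) \<ge> 0" using assms by simp
  with id have "h * (r*a + (N-a)) \<le> (r*a*((a-1)*h + v + (N-1-a)*b)/(N-1) + (a*c + (N-1-a)*h)/(N-1) + (N-1-a)*h)"
    by linarith
  thus ?thesis using den by (simp add: pos_le_divide_eq)
qed


definition psi :: "real \<Rightarrow> bool \<Rightarrow> nat \<Rightarrow> real" where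
  "psi M b k = M ^ (if b then Suc k else k)"

lemma trans_cases:
  assumes n: "n \<ge> 2" and S: "S \<in> Pow {1..n}" and tr: "\<not> (S = {} \<or> S = {1..n})"
  shows "1 \<in> S \<Longrightarrow> card (S - {1}) + 2 \<le> n"
    and "1 \<notin> S \<Longrightarrow> 1 \<le> card S \<and> card S \<le> n - 1"
proof -
  have Ss: "S \<subseteq> {1..n}" using S by auto
  have fS: "finite S" using Ss finite_subset by blast
  {
    assume T: "1 \<in> S"
    have "card S < card {1..n}" using Ss tr by (meson finite_atLeastAtMost psubsetI psubset_card_mono)
    moreover have "card S = card (S - {1}) + 1" using T fS by (metis Suc_eq_plus1 card.remove)
    ultimately show "card (S - {1}) + 2 \<le> n" by simp
  }
  {
    assume c0: "1 \<notin> S"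
    have sub: "S \<subseteq> {1..n} - {1}" using Ss c0 by auto
    have "card S \<le> n - 1" using card_mono[OF _ sub] n by simp
    moreover have "card S \<ge> 1" using fS tr by (simp add: Suc_leI card_gt_0_iff)
    ultimately show "1 \<le> card S \<and> card S \<le> n - 1" by simp
  }
qed

lemma Psi_drift:
  assumes r: "r > 0" and n: "n \<ge> 2" and M: "M > 1" "r * M > real n - 1"
    and S: "S \<in> Pow {1..n}" and tr: "\<not> (S = {} \<or> S = {1..n})"
  shows "PE n r S (lift (psi M)) > lift (psi M) S"
proof -
  have Ss: "S \<subseteq> {1..n}" using S by auto
  have SN: "S \<noteq> {1..n}" using tr by auto
  show ?thesis
  proof (cases "1 \<in> S")
    case True
    define k where "k = card (S - {1})"
    have kn: "k + 2 \<le> n" using trans_cases(1)[OF n S tr True] k_def by simp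
    have e: "PE n r S (lift (psi M)) = (r * (real k + 1) * (real k * (M * M ^ k) + (real n - 1 - real k) * (M * M * M ^ k)) / (real n - 1)
      + (real n - 1 - real k) * M ^ k) / (r * (real k + 1) + (real n - 1 - real k))"
      using E_c1[OF Ss True SN, of r "psi M"] unfolding k_def[symmetric] by (simp add: psi_def)
    have l: "lift (psi M) S = M * M ^ k" using True by (simp add: lift_def psi_def k_def)
    show ?thesis unfolding e l
      by (rule alg1) (use kn n M r in auto)
  next
    case c0: False
    define k where "k = card S"
    have kn: "1 \<le> k" "k \<le> n - 1" using trans_cases(2)[OF n S tr c0] k_def by auto
    have ne: "S \<noteq> {}" using tr by auto
    have pk: "M ^ k = M * M ^ (k - 1)" using kn by (metis One_nat_def Suc_pred not_one_le_zero not_gr0 power_Suc)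
    have e: "PE n r S (lift (psi M)) = (r * real k * ((real k - 1) * (M * M ^ (k - 1)) + M * M * M ^ (k - 1) + (real n - 1 - real k) * (M * M * M ^ (k - 1))) / (real n - 1)
      + (real k * M ^ (k - 1) + (real n - 1 - real k) * (M * M ^ (k - 1))) / (real n - 1)
      + (real n - 1 - real k) * (M * M ^ (k - 1))) / (r * real k + (real n - real k))"
      using E_c0[OF Ss c0 ne, of r "psi M"] unfolding k_def[symmetric] by (simp add: psi_def pk)
    have l: "lift (psi M) S = M * M ^ (k - 1)" using c0 by (simp add: lift_def psi_def k_def[symmetric] pk)
    have kr: "real k \<le> real n - 1" using kn n by linarith
    show ?thesis unfolding e l
      by (rule alg2) (use kn kr n M r in auto)
  qed
qed

definition gphi :: "nat \<Rightarrow> (nat \<Rightarrow> real) \<Rightarrow> bool \<Rightarrow> nat \<Rightarrow> real" where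
  "gphi n h b k = (if b \<and> k = n - 1 then 1 else h k)"

lemma g_drift:
  assumes r: "r > 0" and n: "n \<ge> 2"
    and H1: "\<And>k. 1 \<le> k \<Longrightarrow> k \<le> n - 2 \<Longrightarrow> r * (real n - 1 - real k) * (h (k+1) - h k) = h k - h (k - 1)"
    and H2: "r * (1 - h (n - 1)) \<ge> h (n - 1) - h (n - 2)"
    and Hm: "\<And>k. k + 1 \<le> n - 2 \<Longrightarrow> h k \<le> h (k + 1)"
    and Hle: "h (n - 2) \<le> 1"
    and S: "S \<in> Pow {1..n}" and tr: "\<not> (S = {} \<or> S = {1..n})"
  shows "PE n r S (lift (gphi n h)) \<ge> lift (gphi n h) S"
proof -
  have Ss: "S \<subseteq> {1..n}" using S by auto
  have SN: "S \<noteq> {1..n}" using tr by auto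
  show ?thesis
  proof (cases "1 \<in> S")
    case True
    define k where "k = card (S - {1})"
    have kn: "k + 2 \<le> n" using trans_cases(1)[OF n S tr True] k_def by simp
    define u where "u = gphi n h True (k + 1)"
    have u: "u \<ge> h k"
    proof (cases "k + 1 = n - 1")
      case True
      hence "k = n - 2" by simp
      thus ?thesis using True Hle by (simp add: u_def gphi_def)
    next
      case False
      thus ?thesis using Hm[of k] kn by (simp add: u_def gphi_def)
    qed
    have gk: "gphi n h True k = h k" "gphi n h False k = h k" using kn by (auto simp: gphi_def)
    have e: "PE n r S (lift (gphi n h)) = (r * (real k + 1) * (real k * h k + (real n - 1 - real k) * u) / (real n - 1)
      + (real n - 1 - real k) * h k) / (r * (real k + 1) + (real n - 1 - real k))"
      using E_c1[OF Ss True SN, of r "gphi n h"] unfolding k_def[symmetric] u_def gk .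
    have l: "lift (gphi n h) S = h k" using True gk by (simp add: lift_def k_def)
    show ?thesis unfolding e l
      by (rule alg3) (use kn n r u in auto)
  next
    case c0: False
    define k where "k = card S"
    have kn: "1 \<le> k" "k \<le> n - 1" using trans_cases(2)[OF n S tr c0] k_def by auto
    have ne: "S \<noteq> {}" using tr by auto
    define v where "v = gphi n h True k"
    have e: "PE n r S (lift (gphi n h)) = (r * real k * ((real k - 1) * h k + v + (real n - 1 - real k) * h (k + 1)) / (real n - 1)
      + (real k * h (k - 1) + (real n - 1 - real k) * h k) / (real n - 1)
      + (real n - 1 - real k) * h k) / (r * real k + (real n - real k))"
      using E_c0[OF Ss c0 ne, of r "gphi n h"] unfolding k_def[symmetric] v_def by (simp add: gphi_def)
    have l: "lift (gphi n h) S = h k" using c0 by (simp add: lift_def gphi_def k_def[symmetric])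
    have kr: "real k \<le> real n - 1" using kn n by linarith
    have key: "r * real k * (v - h k) + r * real k * (real n - 1 - real k) * (h (k + 1) - h k) + real k * (h (k - 1) - h k) \<ge> 0"
    proof (cases "k = n - 1")
      case True
      hence E: "real n - 1 - real k = 0" "v = 1" "k - 1 = n - 2" using n by (auto simp: v_def gphi_def)
      have "r * real k * (v - h k) + r * real k * (real n - 1 - real k) * (h (k + 1) - h k) + real k * (h (k - 1) - h k)
          = real k * (r * (1 - h k) - (h k - h (k - 1)))" unfolding E by (simp add: algebra_simps)
      also have "\<dots> = real k * (r * (1 - h (n - 1)) - (h (n - 1) - h (n - 2)))" using True E(3) by simp
      also have "\<dots> \<ge> 0" using H2 by simp
      finally show ?thesis .
    next
      case False
      hence "v = h k" "k \<le> n - 2" using kn by (auto simp: v_def gphi_def)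
      hence "r * real k * (v - h k) + r * real k * (real n - 1 - real k) * (h (k + 1) - h k) + real k * (h (k - 1) - h k)
          = real k * (r * (real n - 1 - real k) * (h (k+1) - h k) - (h k - h (k - 1)))" by (simp add: algebra_simps)
      also have "\<dots> = 0" using H1[of k] kn \<open>k \<le> n - 2\<close> by simp
      finally show ?thesis by simp
    qed
    show ?thesis unfolding e l
      by (rule alg4) (use kn kr n r key in auto)
  qed
qed



lemma ee_nonneg: "r > 0 \<Longrightarrow> ee n r l \<ge> 0"
  by (simp add: ee_def)

lemma ee_rec:
  assumes r: "r > 0" and k: "1 \<le> k" "k \<le> n - 2"
  shows "r * (real n - 1 - real k) * ee n r (k + 1) = ee n r k"
proof -
  define q where "q = n - 2 - k"
  have e1: "n - 1 - (k + 1) = q" "n - 1 - k = Suc q" "k + 1 - 1 = k" using k unfolding q_def by auto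
  have e2: "real n - 1 - real k = real (Suc q)" using k unfolding q_def by (simp add: of_nat_diff)
  have e3: "r ^ k = r * r ^ (k - 1)" using k by (metis One_nat_def Suc_pred not_one_le_zero not_gr0 power_Suc)
  show ?thesis unfolding ee_def e1 e2 e3 using r by (simp add: field_simps)
qed

lemma cond_conv:
  fixes r :: real
  assumes n: "n \<ge> 4" and r: "r > 0" and c: "r > (fact (n - 4)) powr (- 1 / (real n - 2))"
  shows "r ^ (n - 2) * fact (n - 4) > 1"
proof -
  define F :: real where "F = fact (n - 4)"
  have F: "F > 0" "F \<ge> 1" unfolding F_def by auto
  define e where "e = real n - 2"
  have e: "e > 0" "e = real (n - 2)" unfolding e_def using n by (auto simp: of_nat_diff)
  have "(F powr (-1 / e)) powr e < r powr e"
    using c F e by (intro powr_less_mono2) (auto simp: F_def e_def)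
  moreover have "(F powr (-1 / e)) powr e = inverse F"
  proof -
    have "(F powr (-1 / e)) powr e = F powr ((-1 / e) * e)" by (rule powr_powr)
    also have "(-1 / e) * e = - 1" using e by simp
    also have "F powr (- 1) = inverse (F powr 1)" by (rule powr_minus)
    also have "F powr 1 = F" using F by simp
    finally show ?thesis .
  qed
  moreover have "r powr e = r ^ (n - 2)" unfolding e(2) using r by (rule powr_realpow)
  ultimately have "inverse F < r ^ (n - 2)" by simp
  hence "inverse F * F < r ^ (n - 2) * F" using F by (intro mult_strict_right_mono) auto
  thus ?thesis using F unfolding F_def[symmetric] by simp
qed

lemma final_ineq:
  fixes x a b :: real
  assumes "0 < x" "x < 1" "a > 0" "b > 0"
  shows "x / (1 + a + b) > x - a - b"
proof -
  have "(x - a - b) * (1 + a + b) = x - (a + b) * (1 - x + a + b)" by (simp add: algebra_simps)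
  also have "\<dots> < x"
  proof -
    have "(a + b) * (1 - x + a + b) > 0" using assms by (intro mult_pos_pos) auto
    thus ?thesis by linarith
  qed
  finally show ?thesis using assms by (simp add: pos_less_divide_eq add_pos_pos)
qed

lemma h_props:
  fixes r :: real
  assumes n: "n \<ge> 4" and r: "r > 0" and cond: "r ^ (n - 2) * fact (n - 4) > 1"
    and \<tau>_def: "\<tau> = 1 / (1 + 1 / (r * (real n - 2)) + 1 / (r\<^sup>2 * (real n - 3)))"
    and h_def: "h = (\<lambda>k. \<tau> * (\<Sum>l\<in>{1..k}. ee n r l))"
  shows "h 0 = 0" "h 1 = \<tau>" "\<tau> > 0"
    and "\<And>k. 1 \<le> k \<Longrightarrow> k \<le> n - 2 \<Longrightarrow> r * (real n - 1 - real k) * (h (k+1) - h k) = h k - h (k - 1)"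
    and "r * (1 - h (n - 1)) \<ge> h (n - 1) - h (n - 2)"
    and "\<And>k. h k \<le> h (k + 1)"
    and "\<And>k. k \<le> n - 1 \<Longrightarrow> h k \<le> 1"
proof -
  obtain p where p: "n = p + 4" using n by (metis add.commute le_Suc_ex)
  have Dpos: "1 + 1 / (r * (real n - 2)) + 1 / (r\<^sup>2 * (real n - 3)) > 0"
    using n r by (intro add_pos_pos) auto
  show tp: "\<tau> > 0" unfolding \<tau>_def using Dpos by simp
  show "h 0 = 0" unfolding h_def by simp
  show "h 1 = \<tau>" unfolding h_def ee_def using n by (simp add: numeral_2_eq_2)
  have hS: "h (Suc k) = h k + \<tau> * ee n r (Suc k)" for k unfolding h_def by (simp add: algebra_simps)
  show "h k \<le> h (k + 1)" for k using hS[of k] tp ee_nonneg[OF r] by simp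
  show "r * (real n - 1 - real k) * (h (k+1) - h k) = h k - h (k - 1)" if k: "1 \<le> k" "k \<le> n - 2" for k
  proof -
    have "h k - h (k - 1) = \<tau> * ee n r k" using hS[of "k - 1"] k by simp
    moreover have "h (k + 1) - h k = \<tau> * ee n r (k + 1)" using hS[of k] by simp
    ultimately show ?thesis using ee_rec[OF r k] by (simp add: algebra_simps)
  qed
  have cond': "r ^ (p + 2) * fact p > 1" using cond p by simp
  have sb: "(\<Sum>l\<in>{1..n-1}. ee n r l) + ee n r (n - 1) / r \<le> 1 + 1 / (r * (real n - 2)) + 1 / (r\<^sup>2 * (real n - 3))"
    using sum_bound[OF r cond'] p by (simp add: algebra_simps)
  have top: "h (n - 1) + \<tau> * ee n r (n - 1) / r \<le> 1"
  proof -
    have "h (n - 1) + \<tau> * ee n r (n - 1) / r = \<tau> * ((\<Sum>l\<in>{1..n-1}. ee n r l) + ee n r (n - 1) / r)"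
      unfolding h_def by (simp add: algebra_simps)
    also have "\<dots> \<le> \<tau> * (1 + 1 / (r * (real n - 2)) + 1 / (r\<^sup>2 * (real n - 3)))"
      using sb tp by (intro mult_left_mono) auto
    also have "\<dots> = 1" unfolding \<tau>_def using Dpos by simp
    finally show ?thesis .
  qed
  have hn: "h (n - 1) - h (n - 2) = \<tau> * ee n r (n - 1)"
    using hS[of "n - 2"] n by (simp add: Suc_diff_Suc numeral_2_eq_2)
  show "r * (1 - h (n - 1)) \<ge> h (n - 1) - h (n - 2)"
  proof -
    have "\<tau> * ee n r (n - 1) / r \<le> 1 - h (n - 1)" using top by simp
    hence "r * (\<tau> * ee n r (n - 1) / r) \<le> r * (1 - h (n - 1))" using r by (intro mult_left_mono) auto
    thus ?thesis using hn r by simp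
  qed
  have hmono: "h a \<le> h b" if "a \<le> b" for a b
    using that
  proof (induction b)
    case 0 thus ?case by simp
  next
    case (Suc b)
    thus ?case using hS[of b] tp ee_nonneg[OF r, of n "Suc b"] by (cases "a = Suc b") (auto intro: order_trans)
  qed
  show "h k \<le> 1" if "k \<le> n - 1" for k
  proof -
    have "h k \<le> h (n - 1)" using hmono that by simp
    moreover have "\<tau> * ee n r (n - 1) / r \<ge> 0" using tp ee_nonneg[OF r] r by simp
    ultimately show ?thesis using top by linarith
  qed
qed


lemma mass:
  assumes r: "r > 0" and n: "n \<ge> 2" and S0: "S0 \<in> Pow {1..n}"
  shows "(\<Sum>T\<in>Pow {1..n}. md n r S0 t T) = 1"
proof (induction t)
  case 0
  show ?case using md_zero[OF S0, of r "\<lambda>T. 1"] by simp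
next
  case (Suc t)
  have "(\<Sum>T\<in>Pow {1..n}. md n r S0 (Suc t) T) = (\<Sum>T\<in>Pow {1..n}. md n r S0 (Suc t) T * 1)" by simp
  also have "\<dots> = (\<Sum>S\<in>Pow {1..n}. md n r S0 t S * PE n r S (\<lambda>T. 1))" by (rule md_step)
  also have "\<dots> = (\<Sum>S\<in>Pow {1..n}. md n r S0 t S)" by (intro sum.cong refl) (metis PE_one[OF r n] mult.right_neutral)
  finally show ?case using Suc.IH by simp
qed

lemma psi_bound:
  assumes M: "M \<ge> 1" and S: "S \<in> Pow {1..n}"
  shows "0 \<le> lift (psi M) S" "lift (psi M) S \<le> M ^ n"
proof -
  show "0 \<le> lift (psi M) S" using M by (simp add: lift_def psi_def)
  have fS: "finite S" using S finite_subset by auto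
  have cS: "card S \<le> n" using card_mono[of "{1..n}" S] S by auto
  have "(if 1 \<in> S then Suc (card (S - {1})) else card (S - {1})) \<le> n"
  proof (cases "1 \<in> S")
    case True thus ?thesis using cS fS by (simp add: card_Diff_singleton) (metis Suc_pred card_gt_0_iff empty_iff)
  next
    case False thus ?thesis using cS by simp
  qed
  thus "lift (psi M) S \<le> M ^ n" unfolding lift_def psi_def using M by (intro power_increasing) auto
qed

lemma m_tendsto:
  assumes r: "r > 0" and n: "n \<ge> 2" and S0: "S0 \<in> Pow {1..n}"
  shows "(\<lambda>t. \<Sum>S\<in>Pow {1..n}. md n r S0 t S * (if S \<in> Pow {1..n} - {{}, {1..n}} then 1 else 0)) \<longlonglongrightarrow> 0"
proof -
  define M where "M = real n / r + 1"
  have M1: "M > 1" unfolding M_def using r n by simp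
  have "r * M = real n + r" unfolding M_def using r by (simp add: distrib_left)
  hence rM: "r * M > real n - 1" using r by linarith
  define \<Psi> where "\<Psi> = lift (psi M)"
  define Tr where "Tr = Pow {1..n} - {{}, {1..n}}"
  define ind where "ind = (\<lambda>S. if S \<in> Tr then 1 else (0::real))"
  define m where "m = (\<lambda>t. \<Sum>S\<in>Pow {1..n}. md n r S0 t S * ind S)"
  have finTr: "finite Tr" unfolding Tr_def by simp
  have neTr: "Tr \<noteq> {}"
  proof -
    have "{1} \<noteq> {1..n}" using n by (metis atLeastAtMost_singleton_iff numeral_le_one_iff semiring_norm(69))
    hence "{1} \<in> Tr" unfolding Tr_def using n by auto
    thus ?thesis by auto
  qed
  define \<epsilon> where "\<epsilon> = Min ((\<lambda>S. PE n r S \<Psi> - \<Psi> S) ` Tr)"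
  have epos: "\<epsilon> > 0" unfolding \<epsilon>_def
  proof (subst Min_gr_iff)
    show "finite ((\<lambda>S. PE n r S \<Psi> - \<Psi> S) ` Tr)" using finTr by simp
    show "(\<lambda>S. PE n r S \<Psi> - \<Psi> S) ` Tr \<noteq> {}" using neTr by simp
    show "\<forall>a\<in>(\<lambda>S. PE n r S \<Psi> - \<Psi> S) ` Tr. 0 < a"
      using Psi_drift[OF r n M1 rM] unfolding \<Psi>_def Tr_def by auto
  qed
  have drift: "PE n r S \<Psi> \<ge> \<Psi> S + \<epsilon> * ind S" if S: "S \<in> Pow {1..n}" for S
  proof (cases "S \<in> Tr")
    case True
    have "\<epsilon> \<le> PE n r S \<Psi> - \<Psi> S" unfolding \<epsilon>_def using finTr True by (intro Min_le) auto
    thus ?thesis using True by (simp add: ind_def)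
  next
    case False
    hence "S = {} \<or> S = {1..n}" using S unfolding Tr_def by auto
    thus ?thesis using PE_absorb[OF S] False by (simp add: ind_def)
  qed
  have ds: "(\<Sum>T\<in>Pow {1..n}. md n r S0 t T * \<Psi> T) \<ge>
     (\<Sum>T\<in>Pow {1..n}. md n r S0 0 T * \<Psi> T) + (\<Sum>s<t. \<Sum>S\<in>Pow {1..n}. md n r S0 s S * (\<epsilon> * ind S))" for t
    by (rule drift_sum[OF r drift])
  have mnn: "m t \<ge> 0" for t unfolding m_def ind_def by (auto intro!: sum_nonneg mult_nonneg_nonneg md_nonneg[OF r])
  have bound: "(\<Sum>s<t. m s) \<le> M ^ n / \<epsilon>" for t
  proof -
    have "(\<Sum>s<t. \<Sum>S\<in>Pow {1..n}. md n r S0 s S * (\<epsilon> * ind S)) = \<epsilon> * (\<Sum>s<t. m s)"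
      unfolding m_def by (simp add: sum_distrib_left mult_ac)
    moreover have "(\<Sum>T\<in>Pow {1..n}. md n r S0 0 T * \<Psi> T) \<ge> 0"
      using md_zero[OF S0, of r \<Psi>] psi_bound(1)[OF less_imp_le[OF M1] S0] unfolding \<Psi>_def by simp
    moreover have "(\<Sum>T\<in>Pow {1..n}. md n r S0 t T * \<Psi> T) \<le> M ^ n"
    proof -
      have "(\<Sum>T\<in>Pow {1..n}. md n r S0 t T * \<Psi> T) \<le> (\<Sum>T\<in>Pow {1..n}. md n r S0 t T * M ^ n)"
        by (intro sum_mono mult_left_mono md_nonneg[OF r]) (use psi_bound(2)[OF less_imp_le[OF M1]] \<Psi>_def in auto)
      also have "\<dots> = M ^ n" using mass[OF r n S0, of t] by (simp add: sum_distrib_right[symmetric])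
      finally show ?thesis .
    qed
    ultimately have "\<epsilon> * (\<Sum>s<t. m s) \<le> M ^ n" using ds[of t] by linarith
    thus ?thesis using epos by (simp add: field_simps)
  qed
  have "summable m" by (rule summableI_nonneg_bounded[OF mnn bound])
  hence "m \<longlonglongrightarrow> 0" by (rule summable_LIMSEQ_zero)
  thus ?thesis unfolding m_def ind_def Tr_def .
qed


lemma p_mono:
  assumes r: "r > 0"
  shows "md n r S0 t {1..n} \<le> md n r S0 (Suc t) {1..n}"
proof -
  have "md n r S0 t {1..n} * MT n r {1..n} {1..n} \<le> (\<Sum>S\<in>Pow {1..n}. md n r S0 t S * MT n r S {1..n})"
    by (rule member_le_sum[where f = "\<lambda>S. md n r S0 t S * MT n r S {1..n}"])
       (auto intro!: mult_nonneg_nonneg md_nonneg[OF r] MT_nonneg[OF r])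
  moreover have "MT n r {1..n} {1..n} = 1" by (simp add: moran_trans_def)
  ultimately show ?thesis by simp
qed

lemma p_le1:
  assumes r: "r > 0" and n: "n \<ge> 2" and S0: "S0 \<in> Pow {1..n}"
  shows "md n r S0 t {1..n} \<le> 1"
proof -
  have "md n r S0 t {1..n} \<le> (\<Sum>T\<in>Pow {1..n}. md n r S0 t T)"
    by (rule member_le_sum[where f = "\<lambda>T. md n r S0 t T"]) (auto intro!: md_nonneg[OF r])
  thus ?thesis using mass[OF r n S0] by simp
qed

lemma g_upper:
  assumes n: "n \<ge> 2" and h0: "h 0 = 0" and hle: "\<And>k. k \<le> n - 1 \<Longrightarrow> h k \<le> 1"
    and S: "S \<in> Pow {1..n}"
  shows "lift (gphi n h) S \<le> (if S = {1..n} then 1 else 0) + (if S \<in> Pow {1..n} - {{}, {1..n}} then 1 else 0)"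
proof -
  have fS: "finite S" using S finite_subset by auto
  have ck: "card (S - {1}) \<le> n - 1"
  proof -
    have "S - {1} \<subseteq> {1..n} - {1}" using S by auto
    from card_mono[OF _ this] show ?thesis using n by (simp add: card_Diff_singleton)
  qed
  have le1: "lift (gphi n h) S \<le> 1" unfolding lift_def gphi_def using hle[OF ck] by simp
  show ?thesis
  proof (cases "S = {1..n}")
    case True
    thus ?thesis using le1 by simp
  next
    case F: False
    show ?thesis
    proof (cases "S = {}")
      case True thus ?thesis using h0 by (simp add: lift_def gphi_def)
    next
      case False thus ?thesis using F S le1 by simp
    qed
  qed
qed

theorem theorem3:
  fixes n :: nat and r :: real
  assumes "n \<ge> 4" and "r > 0"
    and "r > (fact (n - 4)) powr (- 1 / (real n - 2))"
  shows "fixation_prob n r (undirected_weights n star_edge) (undirected_weights n clique_edge)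
           \<ge> (1 - 1 / real n) / (1 + 1 / (r * (real n - 2)) + 1 / (r\<^sup>2 * (real n - 3)))
       \<and> (1 - 1 / real n) / (1 + 1 / (r * (real n - 2)) + 1 / (r\<^sup>2 * (real n - 3)))
           > 1 - 1 / real n - 1 / (r * (real n - 2)) - 1 / (r\<^sup>2 * (real n - 3))"
proof -
  have n4: "n \<ge> 4" and r: "r > 0" using assms by auto
  have n: "n \<ge> 2" using n4 by simp
  have cond: "r ^ (n - 2) * fact (n - 4) > 1" by (rule cond_conv[OF assms])
  define D where "D = 1 + 1 / (r * (real n - 2)) + 1 / (r\<^sup>2 * (real n - 3))"
  define \<tau> where "\<tau> = 1 / D"
  define h where "h = (\<lambda>k. \<tau> * (\<Sum>l\<in>{1..k}. ee n r l))"
  have tdef: "\<tau> = 1 / (1 + 1 / (r * (real n - 2)) + 1 / (r\<^sup>2 * (real n - 3)))" unfolding \<tau>_def D_def ..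
  note hp = h_props[OF n4 r cond tdef h_def]
  define g where "g = lift (gphi n h)"
  define Tr where "Tr = Pow {1..n} - {{}, {1..n}}"
  define m where "m = (\<lambda>i t. \<Sum>S\<in>Pow {1..n}. md n r {i} t S * (if S \<in> Tr then 1 else 0))"
  have gdrift: "PE n r S g \<ge> g S + 0" if S: "S \<in> Pow {1..n}" for S
  proof (cases "S = {} \<or> S = {1..n}")
    case True thus ?thesis using PE_absorb[OF S True] by simp
  next
    case False
    have "PE n r S g \<ge> g S" unfolding g_def
      by (rule g_drift[OF r n hp(4) hp(5) _ _ S False]) (use n hp(6) hp(7) in auto)
    thus ?thesis by simp
  qed
  have low: "md n r {i} t {1..n} \<ge> g {i} - m i t" if i: "i \<in> {1..n}" for i t
  proof -
    have S0: "{i} \<in> Pow {1..n}" using i by auto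
    have "(\<Sum>T\<in>Pow {1..n}. md n r {i} t T * g T) \<ge>
       (\<Sum>T\<in>Pow {1..n}. md n r {i} 0 T * g T) + (\<Sum>s<t. \<Sum>S\<in>Pow {1..n}. md n r {i} s S * 0)"
      by (rule drift_sum[OF r gdrift])
    hence A: "(\<Sum>T\<in>Pow {1..n}. md n r {i} t T * g T) \<ge> g {i}" using md_zero[OF S0, of r g] by simp
    have "(\<Sum>T\<in>Pow {1..n}. md n r {i} t T * g T) \<le>
       (\<Sum>T\<in>Pow {1..n}. md n r {i} t T * ((if T = {1..n} then 1 else 0) + (if T \<in> Tr then 1 else 0)))"
      by (intro sum_mono mult_left_mono md_nonneg[OF r])
         (use g_upper[of n h, OF n hp(1) hp(7)] in \<open>auto simp: g_def Tr_def\<close>)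
    also have "\<dots> = md n r {i} t {1..n} + m i t"
    proof -
      have "(\<Sum>T\<in>Pow {1..n}. md n r {i} t T * ((if T = {1..n} then 1 else 0) + (if T \<in> Tr then 1 else 0)))
        = (\<Sum>T\<in>Pow {1..n}. (if T = {1..n} then md n r {i} t T else 0)) + m i t"
        unfolding m_def distrib_left sum.distrib by (intro arg_cong2[where f = "(+)"] sum.cong refl) auto
      also have "(\<Sum>T\<in>Pow {1..n}. (if T = {1..n} then md n r {i} t T else 0)) = md n r {i} t {1..n}"
        by (simp add: sum.delta)
      finally show ?thesis .
    qed
    finally show ?thesis using A by linarith
  qed
  define P where "P = (\<lambda>t. (\<Sum>i\<in>{1..n}. md n r {i} t {1..n}) / real n)"
  have Pinc: "incseq P" unfolding P_def
    by (intro incseq_SucI divide_right_mono sum_mono p_mono[OF r]) auto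
  have Pbdd: "bdd_above (range P)"
  proof
    fix x assume "x \<in> range P"
    then obtain t where "x = P t" by auto
    moreover have "(\<Sum>i\<in>{1..n}. md n r {i} t {1..n}) \<le> (\<Sum>i\<in>{1..n}. 1)"
      by (intro sum_mono p_le1[OF r n]) auto
    ultimately show "x \<le> 1" using n unfolding P_def by (simp add: divide_le_eq)
  qed
  have PL: "P \<longlonglongrightarrow> (SUP t. P t)" by (rule LIMSEQ_incseq_SUP[OF Pbdd Pinc])
  have fp: "fixation_prob n r (undirected_weights n star_edge) (undirected_weights n clique_edge) = (SUP t. P t)"
    unfolding fixation_prob_def P_def[symmetric] by (rule limI[OF PL])
  have gsum: "(\<Sum>i\<in>{1..n}. g {i}) = (real n - 1) * \<tau>"
  proof -
    have "(\<Sum>i\<in>{1..n}. g {i}) = g {1} + (\<Sum>i\<in>{1..n} - {1}. g {i})"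
      using n by (subst sum.remove[of _ 1]) auto
    also have "g {1} = 0" using n hp(1) by (simp add: g_def lift_def gphi_def)
    also have "(\<Sum>i\<in>{1..n} - {1}. g {i}) = (\<Sum>i\<in>{1..n} - {1}. \<tau>)"
      by (intro sum.cong refl) (use hp(2) in \<open>auto simp: g_def lift_def gphi_def\<close>)
    also have "\<dots> = (real n - 1) * \<tau>" using n by (simp add: of_nat_diff)
    finally show ?thesis by simp
  qed
  define X where "X = (\<lambda>t. ((real n - 1) * \<tau> - (\<Sum>i\<in>{1..n}. m i t)) / real n)"
  have mt: "(\<lambda>t. m i t) \<longlonglongrightarrow> 0" if "i \<in> {1..n}" for i
    unfolding m_def Tr_def using m_tendsto[OF r n, of "{i}"] that by auto
  have "(\<lambda>t. \<Sum>i\<in>{1..n}. m i t) \<longlonglongrightarrow> (\<Sum>i\<in>{1..n}. 0)"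
    by (rule tendsto_sum) (rule mt)
  hence XL: "X \<longlonglongrightarrow> ((real n - 1) * \<tau> - 0) / real n" unfolding X_def
    using n by (intro tendsto_intros) auto
  have XP: "\<forall>t\<ge>0. X t \<le> P t"
  proof (intro allI impI)
    fix t :: nat
    have "(\<Sum>i\<in>{1..n}. g {i} - m i t) \<le> (\<Sum>i\<in>{1..n}. md n r {i} t {1..n})"
      by (intro sum_mono low) auto
    hence "(real n - 1) * \<tau> - (\<Sum>i\<in>{1..n}. m i t) \<le> (\<Sum>i\<in>{1..n}. md n r {i} t {1..n})"
      unfolding sum_subtractf gsum .
    thus "X t \<le> P t" unfolding X_def P_def using n by (intro divide_right_mono) auto
  qed
  have lower: "((real n - 1) * \<tau> - 0) / real n \<le> (SUP t. P t)"
    by (rule LIMSEQ_le[OF XL PL]) (use XP in blast)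
  have eq: "(1 - 1 / real n) / D = ((real n - 1) * \<tau> - 0) / real n"
    unfolding \<tau>_def using n by (simp add: field_simps)
  have part2: "(1 - 1 / real n) / D > 1 - 1 / real n - 1 / (r * (real n - 2)) - 1 / (r\<^sup>2 * (real n - 3))"
    unfolding D_def
    by (rule final_ineq[where x = "1 - 1 / real n", simplified add.assoc[symmetric]]) (use n4 r in auto)
  show ?thesis using lower eq part2 fp unfolding D_def by simp
qed

end
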